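(* Let $\mathbf{Y}\in\mathbb{R}^{d_1\times d_2}$, let $R\ge r$ be positive integers, and let $\mathbf{X}=\Pi_r(\mathbf{Y})$ with SVD $\mathbf{X}=\mathbf{U}\boldsymbol\Sigma\mathbf{V}^T$. Suppose there exist $\overline{\mathbf{U}}\in\mathbb{R}^{d_1\times R}$ and $\overline{\mathbf{V}}\in\mathbb{R}^{d_2\times R}$ such that $\mathrm{col}(\mathbf{U})\subseteq\mathrm{col}(\overline{\mathbf{U}})$, $\mathrm{col}(\mathbf{V})\subseteq\mathrm{col}(\overline{\mathbf{V}})$, and let $\mathcal{A}=\{\mathbf{A}\in\mathbb{R}^{d_1\times d_2}:\mathrm{col}(\mathbf{A}^T)\subseteq\mathrm{col}(\overline{\mathbf{V}}),\ \mathrm{col}(\mathbf{A})\subseteq\mathrm{col}(\overline{\mathbf{U}})\}$, a linear subspace. Let $\hat{\mathbf{X}}=\Pi_{\mathcal{A}}(\mathbf{Y})$. Then $\mathbf{X}=\Pi_r(\hat{\mathbf{X}})$.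
   Context: $\Pi_r(\mathbf{M})$ denotes a best rank-$\le r$ approximation of a matrix $\mathbf{M}$ in Frobenius norm (rank-$r$ truncated SVD); $\Pi_{\mathcal{A}}$ is the orthogonal (Frobenius) projection onto the subspace $\mathcal{A}$; $\mathrm{col}(\cdot)$ denotes column space. *)

theory Defs
  imports "HOL-Analysis.Analysis"
begin

(* Frobenius norm of a real matrix (d1 x d2 matrices are real^'d2^'d1) *)
definition frob_norm :: "real^'n^'m \<Rightarrow> real" where
  "frob_norm A = sqrt (\<Sum>i\<in>UNIV. \<Sum>j\<in>UNIV. (A $ i $ j)^2)"

definition col_space :: "real^'n^'m \<Rightarrow> (real^'m) set" where
  "col_space A = span (columns A)"

(* Pi_r(M): X is a best rank-<=r approximation of M in Frobenius norm *)
definition best_rank_approx :: "nat \<Rightarrow> real^'n^'m \<Rightarrow> real^'n^'m \<Rightarrow> bool" where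
  "best_rank_approx r M X \<longleftrightarrow> rank X \<le> r \<and>
     (\<forall>Z::real^'n^'m. rank Z \<le> r \<longrightarrow> frob_norm (M - X) \<le> frob_norm (M - Z))"

(* Pi_S(M): P is the orthogonal (Frobenius) projection of M onto the set S *)
definition is_frob_proj :: "(real^'n^'m) set \<Rightarrow> real^'n^'m \<Rightarrow> real^'n^'m \<Rightarrow> bool" where
  "is_frob_proj S M P \<longleftrightarrow> P \<in> S \<and> (\<forall>B\<in>S. frob_norm (M - P) \<le> frob_norm (M - B))"

(* an SVD X = U Sigma V^T with r = CARD('r) components *)
definition is_svd :: "real^'n^'m \<Rightarrow> real^'r^'m \<Rightarrow> real^'r^'r \<Rightarrow> real^'r^'n \<Rightarrow> bool" where
  "is_svd X U S V \<longleftrightarrow> transpose U ** U = mat 1 \<and> transpose V ** V = mat 1 \<and>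
     (\<forall>i j. i \<noteq> j \<longrightarrow> S $ i $ j = 0) \<and> (\<forall>i. S $ i $ i \<ge> 0) \<and>
     X = U ** S ** transpose V"

end

theory Submission
  imports Defs
begin

lemma frob_eq_norm: "frob_norm (A::real^'n^'m) = norm A"
proof -
  have "(norm (A $ i))\<^sup>2 = (\<Sum>j\<in>UNIV. (A $ i $ j)\<^sup>2)" for i
    unfolding norm_vec_def L2_set_def by (simp add: sum_nonneg)
  then show ?thesis unfolding frob_norm_def norm_vec_def[of A] L2_set_def by simp
qed
lemma norm_transpose_eq: "norm (transpose (A::real^'n^'m)) = norm A"
  unfolding frob_eq_norm[symmetric] frob_norm_def transpose_def
  by (simp add: sum.swap[of _ "UNIV::'n set"])

lemma proj_exists:
  fixes W :: "(real^'n) set"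
  assumes "subspace W"
  obtains P :: "real^'n^'n" where "\<And>x. P *v x \<in> W" "\<And>x. x \<in> W \<Longrightarrow> P *v x = x"
    "\<And>x. norm (P *v x) \<le> norm x"
proof -
  obtain T where T: "0 \<notin> T" "T \<subseteq> W" "pairwise orthogonal T" "independent T"
                  "card T = dim W" "span T = W"
    using orthogonal_basis_subspace[OF assms] by blast
  define p where "p = (\<lambda>x::real^'n. \<Sum>b\<in>T. (b \<bullet> x / (b \<bullet> b)) *\<^sub>R b)"
  have lin: "linear p"
    unfolding p_def
    by (auto simp: linear_iff inner_add_right add_divide_distrib scaleR_add_left sum.distrib scaleR_sum_right)
  define P where "P = matrix p"
  have Pv: "P *v x = p x" for x
    using matrix_vector_mul(2)[OF lin] unfolding P_def by metis
  have inW: "p x \<in> W" for x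
  proof -
    have "p x \<in> span T" unfolding p_def by (intro span_sum span_scale span_base)
    then show ?thesis using T(6) by simp
  qed
  have orth: "orthogonal y (x - p x)" if "y \<in> W" for x y
    unfolding p_def using Gram_Schmidt_step[OF T(3), of y x] T(6) that by simp
  show thesis
  proof
    show "P *v x \<in> W" for x using Pv inW by simp
    show "P *v x = x" if "x \<in> W" for x
    proof -
      have "x - p x \<in> W" using that inW assms by (simp add: subspace_diff)
      then have "orthogonal (x - p x) (x - p x)" using orth by blast
      then show ?thesis using Pv by (simp add: orthogonal_def)
    qed
    show "norm (P *v x) \<le> norm x" for x
    proof -
      have "(norm (p x + (x - p x)))\<^sup>2 = (norm (p x))\<^sup>2 + (norm (x - p x))\<^sup>2"
        by (rule norm_add_Pythagorean) (use orth inW in blast)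
      then have "(norm (p x))\<^sup>2 \<le> (norm x)\<^sup>2" by simp
      then show ?thesis using Pv by (simp add: power2_le_iff_abs_le)
    qed
  qed
qed

lemma row_mul: "((M::real^'n^'m) ** transpose (Q::real^'n^'k)) $ i = Q *v (M $ i)"
  by (simp add: vec_eq_iff matrix_matrix_mult_def matrix_vector_mult_def transpose_def mult.commute)

lemma transpose_row: "transpose (M::real^'n^'m) $ j = column j M"
  by (simp add: vec_eq_iff transpose_def column_def)

lemma column_mul: "column j ((A::real^'n^'m) ** B) = A *v column j B"
  by (simp add: vec_eq_iff matrix_matrix_mult_def matrix_vector_mult_def column_def)

lemma column_transpose': "column j (transpose (M::real^'n^'m)) = M $ j"
  by (simp add: vec_eq_iff transpose_def column_def)

lemma mulv_in_col: "(A::real^'n^'m) *v x \<in> col_space A"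
  unfolding col_space_def matrix_mult_sum scalar_mult_eq_scaleR
  by (intro span_sum span_scale span_base) (auto simp: columns_def)

lemma colsp_sub:
  assumes "subspace W"
  shows "col_space (M::real^'n^'m) \<subseteq> W \<longleftrightarrow> (\<forall>j. column j M \<in> W)"
proof
  assume h: "col_space M \<subseteq> W"
  show "\<forall>j. column j M \<in> W"
  proof
    fix j
    have "column j M \<in> columns M" by (auto simp: columns_def)
    then have "column j M \<in> col_space M" unfolding col_space_def by (rule span_base)
    then show "column j M \<in> W" using h by (rule subsetD[rotated])
  qed
next
  assume "\<forall>j. column j M \<in> W"
  then have "columns M \<subseteq> W" unfolding columns_def by auto
  then show "col_space M \<subseteq> W" unfolding col_space_def using assms by (rule span_minimal)
qed

lemma norm_mul_right:
  assumes "\<And>x. norm ((Q::real^'n^'n) *v x) \<le> norm x"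
  shows "norm ((M::real^'n^'m) ** transpose Q) \<le> norm M"
  by (rule norm_le_componentwise_cart) (simp add: row_mul assms)

lemma norm_mul_left:
  assumes "\<And>x. norm ((P::real^'m^'m) *v x) \<le> norm x"
  shows "norm (P ** (M::real^'n^'m)) \<le> norm M"
proof -
  have "norm (P ** M) = norm (transpose M ** transpose P)"
    by (metis matrix_transpose_mul norm_transpose_eq)
  also have "\<dots> \<le> norm (transpose M)" by (rule norm_mul_right[OF assms])
  finally show ?thesis by (simp add: norm_transpose_eq)
qed

lemma row_eq: "row i (M::real^'n^'m) = M $ i"
  by (simp add: row_def vec_eq_iff)

lemma mult_diff_l: "(A::real^'n^'m) ** (B - C) = A ** B - A ** C"
  by (simp add: vec_eq_iff matrix_matrix_mult_def algebra_simps sum_subtractf)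

lemma mult_diff_r: "((B::real^'n^'m) - C) ** (A::real^'k^'n) = B ** A - C ** A"
  by (simp add: vec_eq_iff matrix_matrix_mult_def algebra_simps sum_subtractf)

theorem mainTheorem7:
  fixes Y X :: "real^'d2^'d1"
    and U :: "real^'r^'d1" and S :: "real^'r^'r" and V :: "real^'r^'d2"
    and Ubar :: "real^'R^'d1" and Vbar :: "real^'R^'d2"
    and Xhat :: "real^'d2^'d1"
    and \<A> :: "(real^'d2^'d1) set"
  assumes "CARD('r) \<le> CARD('R)"
    and "best_rank_approx CARD('r) Y X"
    and "is_svd X U S V"
    and "col_space U \<subseteq> col_space Ubar"
    and "col_space V \<subseteq> col_space Vbar"
    and "\<A> = {A. col_space (transpose A) \<subseteq> col_space Vbar \<and> col_space A \<subseteq> col_space Ubar}"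
    and "is_frob_proj \<A> Y Xhat"
  shows "best_rank_approx CARD('r) Xhat X"
proof -
  define WU where "WU = col_space Ubar"
  define WV where "WV = col_space Vbar"
  have sU: "subspace WU" and sV: "subspace WV"
    unfolding WU_def WV_def col_space_def by (auto intro: subspace_span)
  have Achar: "M \<in> \<A> \<longleftrightarrow> (\<forall>j. column j M \<in> WU) \<and> (\<forall>i. M $ i \<in> WV)" for M
    using assms(6) colsp_sub[OF sU, of M] colsp_sub[OF sV, of "transpose M"]
    by (auto simp: WU_def WV_def column_transpose' row_eq)
  have Aeq: "\<A> = {M. (\<forall>j. column j M \<in> WU) \<and> (\<forall>i. M $ i \<in> WV)}" using Achar by blast
  have cadd: "column j (x + y) = column j x + column j y" for x y :: "real^'d2^'d1" and j
    by (simp add: column_def vec_eq_iff)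
  have cscale: "column j (c *\<^sub>R x) = c *\<^sub>R column j x" for x :: "real^'d2^'d1" and c j
    by (simp add: column_def vec_eq_iff)
  have c0: "column j (0::real^'d2^'d1) = 0" for j
    by (simp add: column_def vec_eq_iff)
  have sA: "subspace \<A>"
    unfolding subspace_def Aeq
    using subspace_0[OF sU] subspace_0[OF sV] subspace_add[OF sU] subspace_add[OF sV]
      subspace_scale[OF sU] subspace_scale[OF sV]
    by (auto simp: cadd cscale c0)
  obtain P :: "real^'d1^'d1" where P1: "\<And>x. P *v x \<in> WU" and P2: "\<And>x. x \<in> WU \<Longrightarrow> P *v x = x"
    and P3: "\<And>x. norm (P *v x) \<le> norm x" using proj_exists[OF sU] by blast
  obtain Q :: "real^'d2^'d2" where Q1: "\<And>x. Q *v x \<in> WV" and Q2: "\<And>x. x \<in> WV \<Longrightarrow> Q *v x = x"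
    and Q3: "\<And>x. norm (Q *v x) \<le> norm x" using proj_exists[OF sV] by blast
  have fixP: "P ** M = M" if "M \<in> \<A>" for M
  proof -
    have "transpose (P ** M) = transpose M ** transpose P" by (simp add: matrix_transpose_mul)
    also have "\<dots> = transpose M"
      using that P2 by (simp add: vec_eq_iff[of "transpose M ** transpose P"] row_mul transpose_row Achar)
    finally show ?thesis by simp
  qed
  have fixQ: "M ** transpose Q = M" if "M \<in> \<A>" for M
    using that Q2 by (simp add: vec_eq_iff[of "M ** transpose Q"] row_mul Achar)
  have projA: "P ** M ** transpose Q \<in> \<A>" for M
    unfolding Achar
  proof (intro conjI allI)
    show "column j (P ** M ** transpose Q) \<in> WU" for j
      by (simp add: matrix_mul_assoc[symmetric] column_mul P1)
    show "(P ** M ** transpose Q) $ i \<in> WV" for i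
      by (simp add: row_mul Q1)
  qed
  have XA: "X \<in> \<A>"
    unfolding Achar
  proof (intro conjI allI)
    have X: "X = U ** (S ** transpose V)" using assms(3) by (simp add: is_svd_def matrix_mul_assoc)
    show "column j X \<in> WU" for j
      using assms(4) mulv_in_col[of U] unfolding WU_def by (subst X) (auto simp: column_mul)
    have "transpose X = V ** (transpose S ** transpose U)"
      using X by (simp add: matrix_transpose_mul matrix_mul_assoc)
    then have "X $ i = V *v column i (transpose S ** transpose U)" for i
      by (metis column_transpose' column_mul)
    then show "X $ i \<in> WV" for i using assms(5) mulv_in_col[of V] unfolding WV_def by auto
  qed
  obtain y z where y: "y \<in> span \<A>" and z: "\<And>w. w \<in> span \<A> \<Longrightarrow> orthogonal z w" and Yyz: "Y = y + z"
    using orthogonal_subspace_decomp_exists[of \<A> Y] by blast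
  have spA: "span \<A> = \<A>" using sA by (simp add: span_eq_iff)
  have pyth: "(norm (Y - C))\<^sup>2 = (norm z)\<^sup>2 + (norm (y - C))\<^sup>2" if "C \<in> \<A>" for C
  proof -
    have "y - C \<in> \<A>" using y that sA spA by (simp add: subspace_diff)
    then have "orthogonal z (y - C)" using z spA by blast
    then have "(norm (z + (y - C)))\<^sup>2 = (norm z)\<^sup>2 + (norm (y - C))\<^sup>2" by (rule norm_add_Pythagorean)
    moreover have "z + (y - C) = Y - C" using Yyz by simp
    ultimately show ?thesis by simp
  qed
  have XhA: "Xhat \<in> \<A>" and Xhmin: "\<And>B. B \<in> \<A> \<Longrightarrow> norm (Y - Xhat) \<le> norm (Y - B)"
    using assms(7) by (auto simp: is_frob_proj_def frob_eq_norm)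
  have "Xhat = y"
  proof -
    have "norm (Y - Xhat) \<le> norm (Y - y)" using Xhmin y spA by blast
    then have "(norm (Y - Xhat))\<^sup>2 \<le> (norm z)\<^sup>2" using Yyz by (simp add: power_mono)
    then have "(norm (y - Xhat))\<^sup>2 \<le> 0" using pyth[OF XhA] by simp
    then show ?thesis by simp
  qed
  have pyth2: "(norm (Y - C))\<^sup>2 = (norm z)\<^sup>2 + (norm (Xhat - C))\<^sup>2" if "C \<in> \<A>" for C
    using pyth[OF that] \<open>Xhat = y\<close> by simp
  have rX: "rank X \<le> CARD('r)" and Xmin: "\<And>Z. rank Z \<le> CARD('r) \<Longrightarrow> norm (Y - X) \<le> norm (Y - Z)"
    using assms(2) by (auto simp: best_rank_approx_def frob_eq_norm)
  show ?thesis
    unfolding best_rank_approx_def frob_eq_norm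
  proof (intro conjI allI impI rX)
    fix Z :: "real^'d2^'d1"
    assume rZ: "rank Z \<le> CARD('r)"
    define Z' where "Z' = P ** Z ** transpose Q"
    have Z'A: "Z' \<in> \<A>" unfolding Z'_def by (rule projA)
    have "rank Z' \<le> rank Z" unfolding Z'_def
      by (meson order_trans rank_mul_le_left rank_mul_le_right)
    then have "norm (Y - X) \<le> norm (Y - Z')" using rZ Xmin by simp
    then have "(norm (Y - X))\<^sup>2 \<le> (norm (Y - Z'))\<^sup>2" by (simp add: power_mono)
    then have "(norm (Xhat - X))\<^sup>2 \<le> (norm (Xhat - Z'))\<^sup>2" using pyth2[OF XA] pyth2[OF Z'A] by simp
    then have "norm (Xhat - X) \<le> norm (Xhat - Z')" by (simp add: power2_le_iff_abs_le)
    also have "Xhat - Z' = P ** (Xhat - Z) ** transpose Q"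
      unfolding Z'_def using fixP[OF XhA] fixQ[OF XhA]
      by (simp add: mult_diff_l mult_diff_r matrix_mul_assoc)
    also have "norm \<dots> \<le> norm (P ** (Xhat - Z))" by (rule norm_mul_right[OF Q3])
    also have "\<dots> \<le> norm (Xhat - Z)" by (rule norm_mul_left[OF P3])
    finally show "norm (Xhat - X) \<le> norm (Xhat - Z)" .
  qed
qed

end
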